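(* (a) Let $F=(f^{(1)},f^{(2)},\dots)$ be a non-degenerate circular net with a family of spherical curvature lines, $f^{(j)}$ lying on $s_j$ with $\langle\mathfrak{s}_j,\mathfrak{p}\rangle=-1$. Then there is a lifted-folding of $F$ (namely the one with all folding parameters equal to $-1$) whose result is a circular net all of whose curves lie on one fixed sphere $s$ (namely $s=s_1$); each resulting curve is the image of the corresponding original curve $f^{(j)}$ under a Möbius transformation. (b) Conversely, let $s\in\mathbb{P}(\mathcal{L})$ be a sphere and let $(g^{(1)},g^{(2)},\dots)$ be a sequence of discrete curves on $s$ such that each consecutive pair $(g^{(j)},g^{(j+1)})$ is a Ribaucour pair of $(\mathfrak{s},\mathfrak{m}^{(j,j+1)})$-type for some vectors $\mathfrak{m}^{(j,j+1)}$. Then lifted-foldings of this sequence produce circular nets in 3-space with a family of spherical curvature lines.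
   Context: Light cone model: $\mathbb{R}^{4,2}$ with form $\langle\cdot,\cdot\rangle$ of signature $(4,2)$, light cone $\mathcal{L}$, projectivization $\mathbb{P}(\mathcal{L})$; fixed $\mathfrak{p}$ with $\langle\mathfrak{p},\mathfrak{p}\rangle=-1$; $v\in\mathbb{P}(\mathcal{L})$ with $\langle\mathfrak{v},\mathfrak{p}\rangle=0$ are points of $\mathbb{R}^3\cup\{\infty\}$, the others oriented spheres (including planes); incidence is orthogonality. Inversion in $\mathfrak{a}$ ($\langle\mathfrak{a},\mathfrak{a}\rangle\ne0$): $\sigma_a(x)=x-\frac{2\langle x,\mathfrak{a}\rangle}{\langle\mathfrak{a},\mathfrak{a}\rangle}\mathfrak{a}$; M-inversion if $\mathfrak{a}\perp\mathfrak{p}$; $\sigma_a$ fixes exactly the vectors orthogonal to $\mathfrak{a}$. Discrete curves $f:\mathcal{V}\to\mathbb{P}(\mathcal{L})$ (points, $\mathcal{V}$ consecutive integers). A Ribaucour pair $(f,g)$: for each edge $(ij)$, $f_i,f_j,g_j,g_i$ concircular; then representatives can be chosen with $\mathfrak{f}_i-\mathfrak{f}_j+\mathfrak{g}_j-\mathfrak{g}_i=0$, and the R-evolution map assigns to $(ij)$ the M-inversion in $\mathfrak{r}_{ij}:=\mathfrak{f}_i-\mathfrak{f}_j=\mathfrak{g}_i-\mathfrak{g}_j$ (the unique edge-wise M-inversions mapping $f_i\mapsto f_j$ and $g_i\mapsto g_j$). The pair is of $(\mathfrak{m}^1,\mathfrak{m}^2)$-type if $\mathrm{span}\{\mathfrak{m}^1,\mathfrak{m}^2,\mathfrak{p}\}$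 is 3-dimensional and consists of fixed points of all inversions of the R-evolution map. A circular net with a family of spherical curvature lines is a sequence of curves, consecutive ones forming Ribaucour pairs, each lying on a sphere; non-degenerate if consecutive spheres are distinct. Lifted-folding of such a net with spheres $s_j$ normalized by $\langle\mathfrak{s}_j,\mathfrak{p}\rangle=-1$ and parameters $\lambda_{j,j+1}\in\mathbb{R}$: $\sigma_{12}$ is the inversion in $\mathfrak{s}_1+\lambda_{12}\mathfrak{s}_2-(1+\lambda_{12})\mathfrak{p}$; with $\Phi_j:=\sigma_{j-1,j}\circ\cdots\circ\sigma_{12}$, $\sigma_{j,j+1}$ is the inversion in $\Phi_j(\mathfrak{s}_j)+\lambda_{j,j+1}\Phi_j(\mathfrak{s}_{j+1})-(1+\lambda_{j,j+1})\mathfrak{p}$; the new net is $(f^{(1)},\Phi_2(f^{(2)}),\Phi_3(f^{(3)}),\dots)$. For a sequence of $(\mathfrak{m}^1_{j,j+1},\mathfrak{m}^2_{j,j+1})$-type Ribaucour pairs the folding inversions are equivalently the inversions in $\mathfrak{n}=\mathfrak{m}^1+\tilde\lambda\mathfrak{m}^2+\langle\mathfrak{m}^1+\tilde\lambda\mathfrak{m}^2,\mathfrak{p}\rangle\mathfrak{p}$, $\tilde\lambda\in\mathbb{R}$ (applied iteratively, the complexes being transported by the previously applied inversions). *)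

theory Defs
  imports "HOL-Analysis.Analysis"
begin

text \<open>The light cone model: R^{4,2} is rendered as real^6 with the symmetric
bilinear form of signature (4,2) below.\<close>

type_synonym vec6 = "real ^ 6"

definition lf :: "vec6 \<Rightarrow> vec6 \<Rightarrow> real" where
  "lf x y = x$1*y$1 + x$2*y$2 + x$3*y$3 + x$4*y$4 - x$5*y$5 - x$6*y$6"

definition proj_eq :: "vec6 \<Rightarrow> vec6 \<Rightarrow> bool" where
  "proj_eq x y \<longleftrightarrow> (\<exists>c. c \<noteq> 0 \<and> y = c *\<^sub>R x)"

text \<open>Representatives of points of R^3 \<union> {\<infinity>} and of oriented spheres.\<close>
definition is_point :: "vec6 \<Rightarrow> vec6 \<Rightarrow> bool" where
  "is_point p x \<longleftrightarrow> x \<noteq> 0 \<and> lf x x = 0 \<and> lf x p = 0"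

definition is_sphere :: "vec6 \<Rightarrow> vec6 \<Rightarrow> bool" where
  "is_sphere p s \<longleftrightarrow> s \<noteq> 0 \<and> lf s s = 0 \<and> lf s p \<noteq> 0"

definition inv_in :: "vec6 \<Rightarrow> vec6 \<Rightarrow> vec6" where
  "inv_in a x = x - (2 * lf x a / lf a a) *\<^sub>R a"

definition m_inv_vec :: "vec6 \<Rightarrow> vec6 \<Rightarrow> bool" where
  "m_inv_vec p a \<longleftrightarrow> lf a a \<noteq> 0 \<and> lf a p = 0"

inductive mobius :: "vec6 \<Rightarrow> (vec6 \<Rightarrow> vec6) \<Rightarrow> bool" for p where
  mobius_id: "mobius p id"
| mobius_step: "mobius p T \<Longrightarrow> m_inv_vec p a \<Longrightarrow> mobius p (inv_in a \<circ> T)"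

definition consecutive :: "int set \<Rightarrow> bool" where
  "consecutive V \<longleftrightarrow> V \<noteq> {} \<and> (\<forall>i\<in>V. \<forall>k\<in>V. \<forall>j. i \<le> j \<and> j \<le> k \<longrightarrow> j \<in> V)"

definition is_curve :: "vec6 \<Rightarrow> int set \<Rightarrow> (int \<Rightarrow> vec6) \<Rightarrow> bool" where
  "is_curve p V f \<longleftrightarrow> consecutive V \<and> (\<forall>i\<in>V. is_point p (f i))"

text \<open>Four points of P(L) are concircular iff their representatives are
linearly dependent (span of dimension at most 3).\<close>
definition concircular :: "vec6 \<Rightarrow> vec6 \<Rightarrow> vec6 \<Rightarrow> vec6 \<Rightarrow> bool" where
  "concircular x y z w \<longleftrightarrow>
     (\<exists>a b c d. (a, b, c, d) \<noteq> (0, 0, 0, 0) \<and>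
        a *\<^sub>R x + b *\<^sub>R y + c *\<^sub>R z + d *\<^sub>R w = 0)"

definition rib_pair :: "int set \<Rightarrow> (int \<Rightarrow> vec6) \<Rightarrow> (int \<Rightarrow> vec6) \<Rightarrow> bool" where
  "rib_pair V f g \<longleftrightarrow>
     (\<forall>i. i \<in> V \<and> i + 1 \<in> V \<longrightarrow> concircular (f i) (f (i + 1)) (g (i + 1)) (g i))"

text \<open>Ribaucour pair of (m1,m2)-type: span{m1,m2,p} is 3-dimensional and consists
of fixed points of the edge-wise M-inversions of the R-evolution map (the M-inversions
mapping f_i to f_{i+1} and g_i to g_{i+1}).\<close>
definition rib_type ::
  "vec6 \<Rightarrow> int set \<Rightarrow> (int \<Rightarrow> vec6) \<Rightarrow> (int \<Rightarrow> vec6) \<Rightarrow> vec6 \<Rightarrow> vec6 \<Rightarrow> bool" where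
  "rib_type p V f g m1 m2 \<longleftrightarrow>
     rib_pair V f g \<and> dim {m1, m2, p} = 3 \<and>
     (\<forall>i. i \<in> V \<and> i + 1 \<in> V \<longrightarrow>
        (\<exists>a. m_inv_vec p a \<and> proj_eq (inv_in a (f i)) (f (i + 1)) \<and>
             proj_eq (inv_in a (g i)) (g (i + 1)) \<and>
             (\<forall>x\<in>span {m1, m2, p}. inv_in a x = x)))"

definition circ_net :: "vec6 \<Rightarrow> int set \<Rightarrow> nat \<Rightarrow> (nat \<Rightarrow> int \<Rightarrow> vec6) \<Rightarrow> bool" where
  "circ_net p V N F \<longleftrightarrow>
     (\<forall>j\<in>{1..N}. is_curve p V (F j)) \<and> (\<forall>j\<in>{1..<N}. rib_pair V (F j) (F (Suc j)))"

definition circ_net_sph :: "vec6 \<Rightarrow> int set \<Rightarrow> nat \<Rightarrow> (nat \<Rightarrow> int \<Rightarrow> vec6) \<Rightarrow> bool" where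
  "circ_net_sph p V N F \<longleftrightarrow> circ_net p V N F \<and>
     (\<forall>j\<in>{1..N}. \<exists>t. is_sphere p t \<and> (\<forall>i\<in>V. lf (F j i) t = 0))"

text \<open>Lifted-folding maps: Phi 1 = id, Phi (j+1) = sigma_{j,j+1} o Phi j, where
sigma_{j,j+1} is the inversion in Phi_j(s_j) + lam_j Phi_j(s_{j+1}) - (1+lam_j) p.
Here lam j stands for lambda_{j,j+1}.\<close>
fun fold_map :: "vec6 \<Rightarrow> (nat \<Rightarrow> vec6) \<Rightarrow> (nat \<Rightarrow> real) \<Rightarrow> nat \<Rightarrow> vec6 \<Rightarrow> vec6" where
  "fold_map p s lam 0 = id"
| "fold_map p s lam (Suc j) =
     (if j = 0 then id
      else inv_in (fold_map p s lam j (s j) + lam j *\<^sub>R fold_map p s lam j (s (Suc j))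
                   - (1 + lam j) *\<^sub>R p) \<circ> fold_map p s lam j)"

definition lifted_folding ::
  "vec6 \<Rightarrow> (nat \<Rightarrow> vec6) \<Rightarrow> (nat \<Rightarrow> real) \<Rightarrow> (nat \<Rightarrow> int \<Rightarrow> vec6) \<Rightarrow> nat \<Rightarrow> int \<Rightarrow> vec6" where
  "lifted_folding p s lam F j = fold_map p s lam j \<circ> F j"

text \<open>Folding for sequences of (m1,m2)-type Ribaucour pairs: iterated inversions in
n_j = Psi_j(m1_j + lt_j m2_j) + <Psi_j(m1_j + lt_j m2_j), p> p, where Psi_j is
the composition of the previously applied inversions (Psi_1 = id).\<close>
definition nvec :: "vec6 \<Rightarrow> vec6 \<Rightarrow> vec6" where
  "nvec p x = x + lf x p *\<^sub>R p"

fun mfold_map ::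
  "vec6 \<Rightarrow> (nat \<Rightarrow> vec6) \<Rightarrow> (nat \<Rightarrow> vec6) \<Rightarrow> (nat \<Rightarrow> real) \<Rightarrow> nat \<Rightarrow> vec6 \<Rightarrow> vec6" where
  "mfold_map p m1 m2 lt 0 = id"
| "mfold_map p m1 m2 lt (Suc j) =
     (if j = 0 then id
      else inv_in (nvec p (mfold_map p m1 m2 lt j (m1 j + lt j *\<^sub>R m2 j))) \<circ> mfold_map p m1 m2 lt j)"

definition mfold_vec :: "vec6 \<Rightarrow> (nat \<Rightarrow> vec6) \<Rightarrow> (nat \<Rightarrow> vec6) \<Rightarrow> (nat \<Rightarrow> real) \<Rightarrow> nat \<Rightarrow> vec6" where
  "mfold_vec p m1 m2 lt j = nvec p (mfold_map p m1 m2 lt j (m1 j + lt j *\<^sub>R m2 j))"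

definition mfolding ::
  "vec6 \<Rightarrow> (nat \<Rightarrow> vec6) \<Rightarrow> (nat \<Rightarrow> vec6) \<Rightarrow> (nat \<Rightarrow> real) \<Rightarrow> (nat \<Rightarrow> int \<Rightarrow> vec6) \<Rightarrow> nat \<Rightarrow> int \<Rightarrow> vec6" where
  "mfolding p m1 m2 lt G j = mfold_map p m1 m2 lt j \<circ> G j"

end

theory Submission
  imports Defs
begin

lemma lf_sym: "lf x y = lf y x" unfolding lf_def by (simp add: mult.commute)
lemma lf_add1: "lf (x + y) z = lf x z + lf y z" unfolding lf_def by (simp add: algebra_simps)
lemma lf_add2: "lf z (x + y) = lf z x + lf z y" unfolding lf_def by (simp add: algebra_simps)
lemma lf_diff1: "lf (x - y) z = lf x z - lf y z" unfolding lf_def by (simp add: algebra_simps)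
lemma lf_diff2: "lf z (x - y) = lf z x - lf z y" unfolding lf_def by (simp add: algebra_simps)
lemma lf_scale1: "lf (c *\<^sub>R x) z = c * lf x z" unfolding lf_def by (simp add: algebra_simps)
lemma lf_scale2: "lf z (c *\<^sub>R x) = c * lf z x" unfolding lf_def by (simp add: algebra_simps)
lemma lf_zero1: "lf 0 z = 0" unfolding lf_def by simp
lemma lf_zero2: "lf z 0 = 0" unfolding lf_def by simp
lemmas lf_simps = lf_add1 lf_add2 lf_diff1 lf_diff2 lf_scale1 lf_scale2 lf_zero1 lf_zero2

lemma inv_in_add: "inv_in a (x+y) = inv_in a x + inv_in a y"
proof -
  have "2 * lf (x+y) a / lf a a = 2 * lf x a / lf a a + 2 * lf y a / lf a a"
    by (simp add: lf_simps add_divide_distrib distrib_left)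
  then show ?thesis unfolding inv_in_def by (simp add: scaleR_add_left)
qed
lemma inv_in_scale: "inv_in a (c *\<^sub>R x) = c *\<^sub>R inv_in a x"
  unfolding inv_in_def by (simp add: lf_simps scaleR_diff_right)
lemma inv_in_lf: assumes "lf a a \<noteq> 0" shows "lf (inv_in a x) (inv_in a y) = lf x y"
proof -
  define L where "L = lf a a"
  define u where "u = 2 * lf x a / L"
  define v where "v = 2 * lf y a / L"
  have "lf (inv_in a x) (inv_in a y) = lf (x - u *\<^sub>R a) (y - v *\<^sub>R a)"
    unfolding inv_in_def u_def v_def L_def ..
  also have "\<dots> = lf x y - v * lf x a - u * lf a y + u * v * L"
    by (simp add: lf_simps L_def algebra_simps)
  also have "\<dots> = lf x y" using assms unfolding u_def v_def L_def
    by (simp add: lf_sym[of a y] field_simps)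
  finally show ?thesis .
qed
lemma inv_in_inv: assumes "lf a a \<noteq> 0" shows "inv_in a (inv_in a x) = x"
proof -
  define u where "u = 2 * lf x a / lf a a"
  have "lf (x - u *\<^sub>R a) a = - lf x a" using assms unfolding u_def by (simp add: lf_simps field_simps)
  hence "inv_in a (x - u *\<^sub>R a) = x - u *\<^sub>R a + u *\<^sub>R a" unfolding inv_in_def u_def by simp
  thus ?thesis unfolding inv_in_def u_def by simp
qed
lemma inv_in_fix: "lf x a = 0 \<Longrightarrow> inv_in a x = x"
  unfolding inv_in_def by simp
lemma inv_in_fixD: "lf a a \<noteq> 0 \<Longrightarrow> inv_in a x = x \<Longrightarrow> lf x a = 0"
proof -
  assume h: "lf a a \<noteq> 0" "inv_in a x = x"
  hence a0: "a \<noteq> 0" using lf_zero1 by auto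
  from h have "(2 * lf x a / lf a a) *\<^sub>R a = 0" unfolding inv_in_def by simp
  with a0 h(1) show ?thesis by simp
qed
lemma inv_in_comm: assumes "lf b c = 0" shows "inv_in b (inv_in c x) = inv_in c (inv_in b x)"
proof -
  define u where "u = 2 * lf x c / lf c c"
  define v where "v = 2 * lf x b / lf b b"
  have 1: "lf (x - u *\<^sub>R c) b = lf x b" using assms by (simp add: lf_simps lf_sym[of c b])
  have 2: "lf (x - v *\<^sub>R b) c = lf x c" using assms by (simp add: lf_simps)
  show ?thesis unfolding inv_in_def u_def[symmetric] v_def[symmetric] 1 2
    by (simp add: algebra_simps)
qed
definition good :: "vec6 \<Rightarrow> (vec6 \<Rightarrow> vec6) \<Rightarrow> bool" where
  "good p T \<longleftrightarrow> (\<forall>x y. T (x+y) = T x + T y) \<and> (\<forall>c x. T (c *\<^sub>R x) = c *\<^sub>R T x) \<and>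
     (\<forall>x y. lf (T x) (T y) = lf x y) \<and> T p = p \<and> (\<forall>x. T x = 0 \<longrightarrow> x = 0)"

lemma mobius_good: "mobius p T \<Longrightarrow> good p T"
proof (induction rule: mobius.induct)
  case mobius_id
  then show ?case by (simp add: good_def)
next
  case (mobius_step T a)
  have L: "lf a a \<noteq> 0" "lf a p = 0" using mobius_step(2) by (auto simp: m_inv_vec_def)
  have z: "inv_in a 0 = 0" unfolding inv_in_def by (simp add: lf_zero1)
  show ?case using mobius_step(3) L unfolding good_def
    by (simp add: inv_in_add inv_in_scale inv_in_lf inv_in_fix lf_sym[of p a]) (metis inv_in_inv z)
qed

lemma good_0: "good p T \<Longrightarrow> T 0 = 0"
  unfolding good_def by (metis scale_zero_left)
lemma good_diff: "good p T \<Longrightarrow> T (x - y) = T x - T y"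
  unfolding good_def by (metis add_diff_cancel diff_add_cancel)
lemma good_inv: "good p T \<Longrightarrow> T (inv_in a x) = inv_in (T a) (T x)"
  unfolding inv_in_def by (simp add: good_diff) (simp add: good_def)

lemma good_point: "good p T \<Longrightarrow> is_point p x \<Longrightarrow> is_point p (T x)"
  unfolding is_point_def good_def by metis
lemma good_sphere: "good p T \<Longrightarrow> is_sphere p x \<Longrightarrow> is_sphere p (T x)"
  unfolding is_sphere_def good_def by metis

lemma concirc_B:
  assumes "X2 = \<alpha> *\<^sub>R inv_in c X1" "X3 = \<beta> *\<^sub>R inv_in c X4" "\<alpha> \<noteq> 0" "\<beta> \<noteq> 0"
  shows "concircular X1 X2 X3 X4"
proof -
  define u where "u = 2 * lf X1 c / lf c c"
  define w where "w = 2 * lf X4 c / lf c c"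
  have X2: "X2 = \<alpha> *\<^sub>R (X1 - u *\<^sub>R c)" using assms(1) by (simp add: inv_in_def u_def)
  have X3: "X3 = \<beta> *\<^sub>R (X4 - w *\<^sub>R c)" using assms(2) by (simp add: inv_in_def w_def)
  show ?thesis unfolding concircular_def
  proof (cases "u = 0")
    case True
    show "\<exists>a b c d. (a, b, c, d) \<noteq> (0, 0, 0, 0) \<and> a *\<^sub>R X1 + b *\<^sub>R X2 + c *\<^sub>R X3 + d *\<^sub>R X4 = 0"
      by (rule exI[of _ \<alpha>], rule exI[of _ "-1"], rule exI[of _ 0], rule exI[of _ 0])
        (simp add: X2 True assms)
  next
    case F: False
    show "\<exists>a b c d. (a, b, c, d) \<noteq> (0, 0, 0, 0) \<and> a *\<^sub>R X1 + b *\<^sub>R X2 + c *\<^sub>R X3 + d *\<^sub>R X4 = 0"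
    proof (cases "w = 0")
      case True
      show ?thesis
        by (rule exI[of _ 0], rule exI[of _ 0], rule exI[of _ 1], rule exI[of _ "-\<beta>"])
          (simp add: X3 True)
    next
      case False
      show ?thesis
        by (rule exI[of _ "-w"], rule exI[of _ "w/\<alpha>"], rule exI[of _ "-u/\<beta>"], rule exI[of _ u])
          (simp add: X2 X3 False F assms algebra_simps)
    qed
  qed
qed

lemma concirc_A:
  assumes T: "good p T" and C: "concircular f1 f2 g2 g1"
    and "lf f1 u = 0" "lf f2 u = 0" "lf g1 v = 0" "lf g2 v = 0" and A: "A = T u - T v"
  shows "concircular (T f1) (T f2) (inv_in A (T g2)) (inv_in A (T g1))"
proof -
  obtain a b c d where abcd: "(a, b, c, d) \<noteq> (0, 0, 0, 0)"
    "a *\<^sub>R f1 + b *\<^sub>R f2 + c *\<^sub>R g2 + d *\<^sub>R g1 = 0" using C unfolding concircular_def by blast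
  have lT: "lf (T x) (T y) = lf x y" for x y using T unfolding good_def by blast
  have addT: "T (x + y) = T x + T y" for x y using T unfolding good_def by blast
  have scT: "T (k *\<^sub>R x) = k *\<^sub>R T x" for k x using T unfolding good_def by blast
  have lg: "lf (T g) A = lf g u" if "lf g v = 0" for g using that by (simp add: A lf_simps lT)
  have "lf (a *\<^sub>R f1 + b *\<^sub>R f2 + c *\<^sub>R g2 + d *\<^sub>R g1) u = 0" using abcd(2) by (simp add: lf_simps)
  hence key: "c * lf g2 u + d * lf g1 u = 0" using assms by (simp add: lf_simps)
  define L where "L = lf A A"
  have e: "inv_in A (T g) = T g - (2 * lf g u / L) *\<^sub>R A" if "lf g v = 0" for g
    unfolding inv_in_def L_def using lg[OF that] by simp
  have Tsum: "T (a *\<^sub>R f1 + b *\<^sub>R f2 + c *\<^sub>R g2 + d *\<^sub>R g1) = a *\<^sub>R T f1 + b *\<^sub>R T f2 + c *\<^sub>R T g2 + d *\<^sub>R T g1"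
    by (simp only: addT scT)
  have gen: "c *\<^sub>R (x - k2 *\<^sub>R B) + d *\<^sub>R (y - k1 *\<^sub>R B) = c *\<^sub>R x + d *\<^sub>R y - (c*k2 + d*k1) *\<^sub>R B"
    for x y k1 k2 and B :: vec6 by (simp add: algebra_simps)
  have co: "c * (2 * lf g2 u / L) + d * (2 * lf g1 u / L) = 2 * (c * lf g2 u + d * lf g1 u) / L"
    by (simp add: algebra_simps add_divide_distrib)
  have "a *\<^sub>R T f1 + b *\<^sub>R T f2 + c *\<^sub>R inv_in A (T g2) + d *\<^sub>R inv_in A (T g1)
     = (a *\<^sub>R T f1 + b *\<^sub>R T f2) + (c *\<^sub>R inv_in A (T g2) + d *\<^sub>R inv_in A (T g1))"
    by (simp add: add.assoc)
  also have "\<dots> = (a *\<^sub>R T f1 + b *\<^sub>R T f2) + (c *\<^sub>R T g2 + d *\<^sub>R T g1)"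
    unfolding e[OF assms(5)] e[OF assms(6)] gen co key by simp
  also have "\<dots> = T (a *\<^sub>R f1 + b *\<^sub>R f2 + c *\<^sub>R g2 + d *\<^sub>R g1)"
    unfolding Tsum by (simp add: add.assoc)
  also have "\<dots> = 0" using abcd(2) good_0[OF T] by simp
  finally show ?thesis unfolding concircular_def using abcd(1) by blast
qed


lemma swap_inv: assumes "lf x x = 0" "lf y y = 0" "lf x y \<noteq> 0" shows "inv_in (x - y) y = x"
proof -
  have 1: "lf y (x - y) = lf x y" using assms by (simp add: lf_simps lf_sym[of y x])
  have 2: "lf (x - y) (x - y) = - 2 * lf x y" using assms by (simp add: lf_simps lf_sym[of y x])
  have 3: "2 * lf x y / (- 2 * lf x y) = -1" using assms(3) by simp
  show ?thesis unfolding inv_in_def 1 2 3 by simp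
qed

lemma fold_eq: "j \<noteq> 0 \<Longrightarrow> fold_map p s (\<lambda>_. -1) (Suc j) =
  inv_in (fold_map p s (\<lambda>_. -1) j (s j) - fold_map p s (\<lambda>_. -1) j (s (Suc j))) \<circ> fold_map p s (\<lambda>_. -1) j"
  by simp

lemma fold_props:
  assumes sph: "\<forall>j\<in>{1..N}. lf (s j) (s j) = 0 \<and> lf (s j) p = -1"
    and ne: "\<forall>j\<in>{1..<N}. lf (s j) (s (Suc j)) \<noteq> 0"
  shows "1 \<le> j \<Longrightarrow> j \<le> N \<Longrightarrow> mobius p (fold_map p s (\<lambda>_. -1) j) \<and> fold_map p s (\<lambda>_. -1) j (s j) = s 1"
proof (induction j)
  case 0 thus ?case by simp
next
  case (Suc j)
  show ?case
  proof (cases "j = 0")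
    case True thus ?thesis using mobius_id[of p] by (simp add: id_def)
  next
    case False
    define T where "T = fold_map p s (\<lambda>_. -1) j"
    from Suc False have IH: "mobius p T" "T (s j) = s 1" unfolding T_def by auto
    have G: "good p T" using mobius_good IH(1) by blast
    have lT: "lf (T x) (T y) = lf x y" for x y using G unfolding good_def by blast
    have Tp: "T p = p" using G unfolding good_def by blast
    define A where "A = T (s j) - T (s (Suc j))"
    have eq: "fold_map p s (\<lambda>_. -1) (Suc j) = inv_in A \<circ> T" using False unfolding A_def T_def by simp
    have jN: "j \<in> {1..<N}" "j \<in> {1..N}" "Suc j \<in> {1..N}" using Suc.prems False by auto
    have LA: "lf A A = -2 * lf (s j) (s (Suc j))" using sph jN
      by (simp add: A_def lf_simps lT lf_sym[of "s (Suc j)" "s j"])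
    have lTp: "lf (T x) p = lf x p" for x using lT[of x p] Tp by simp
    have LAp: "lf A p = 0" using sph jN
      by (simp add: A_def lf_simps lTp)
    have mi: "m_inv_vec p A" unfolding m_inv_vec_def using LA LAp ne jN by simp
    have sw: "inv_in A (T (s (Suc j))) = T (s j)" unfolding A_def
      by (rule swap_inv) (use sph jN ne in \<open>simp_all add: lT\<close>)
    have v: "(inv_in A \<circ> T) (s (Suc j)) = s 1" using sw IH by simp
    show ?thesis unfolding eq using mobius_step[OF IH(1) mi] v by blast
  qed
qed

lemma partA:
  assumes "lf p p = -1"
    and cn: "circ_net p V N F"
    and S: "\<forall>j\<in>{1..N}. is_sphere p (s j) \<and> lf (s j) p = -1 \<and> (\<forall>i\<in>V. lf (F j i) (s j) = 0)"
    and ne: "\<forall>j\<in>{1..<N}. lf (s j) (s (Suc j)) \<noteq> 0"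
  shows "circ_net p V N (lifted_folding p s (\<lambda>_. -1) F) \<and>
      (\<forall>j\<in>{1..N}. \<forall>i\<in>V. lf (lifted_folding p s (\<lambda>_. -1) F j i) (s 1) = 0) \<and>
      (\<forall>j\<in>{1..N}. \<exists>T. mobius p T \<and>
          (\<forall>i\<in>V. proj_eq (T (F j i)) (lifted_folding p s (\<lambda>_. -1) F j i)))"
proof -
  let ?P = "fold_map p s (\<lambda>_. -1)"
  have sph: "\<forall>j\<in>{1..N}. lf (s j) (s j) = 0 \<and> lf (s j) p = -1" using S by (auto simp: is_sphere_def)
  have FP: "mobius p (?P j) \<and> ?P j (s j) = s 1" if "j \<in> {1..N}" for j
    using fold_props[OF sph ne] that by auto
  have G: "good p (?P j)" if "j \<in> {1..N}" for j using FP[OF that] mobius_good by blast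
  have LF: "lifted_folding p s (\<lambda>_. -1) F j i = ?P j (F j i)" for j i
    by (simp add: lifted_folding_def)
  have curves: "is_curve p V (F j)" if "j \<in> {1..N}" for j using cn that unfolding circ_net_def by blast
  have c1: "is_curve p V (lifted_folding p s (\<lambda>_. -1) F j)" if j: "j \<in> {1..N}" for j
    using curves[OF j] good_point[OF G[OF j]] unfolding is_curve_def LF by blast
  have c2: "rib_pair V (lifted_folding p s (\<lambda>_. -1) F j) (lifted_folding p s (\<lambda>_. -1) F (Suc j))"
    if j: "j \<in> {1..<N}" for j
    unfolding rib_pair_def
  proof (intro allI impI)
    fix i assume i: "i \<in> V \<and> i + 1 \<in> V"
    have jj: "j \<in> {1..N}" "Suc j \<in> {1..N}" "j \<noteq> 0" using j by auto
    have rp: "rib_pair V (F j) (F (Suc j))" using cn j unfolding circ_net_def by blast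
    have cc: "concircular (F j i) (F j (i + 1)) (F (Suc j) (i + 1)) (F (Suc j) i)"
      using rp i unfolding rib_pair_def by blast
    show "concircular (lifted_folding p s (\<lambda>_. -1) F j i) (lifted_folding p s (\<lambda>_. -1) F j (i + 1))
          (lifted_folding p s (\<lambda>_. -1) F (Suc j) (i + 1)) (lifted_folding p s (\<lambda>_. -1) F (Suc j) i)"
      unfolding LF fold_eq[OF jj(3)] o_apply
      by (rule concirc_A[OF G[OF jj(1)] cc]) (use S jj i in auto)
  qed
  have c3: "lf (lifted_folding p s (\<lambda>_. -1) F j i) (s 1) = 0" if j: "j \<in> {1..N}" and i: "i \<in> V" for j i
  proof -
    have "lf (lifted_folding p s (\<lambda>_. -1) F j i) (s 1) = lf (?P j (F j i)) (?P j (s j))"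
      using FP[OF j] LF by simp
    also have "\<dots> = lf (F j i) (s j)" using G[OF j] unfolding good_def by blast
    finally show ?thesis using S j i by simp
  qed
  have c4: "\<exists>T. mobius p T \<and> (\<forall>i\<in>V. proj_eq (T (F j i)) (lifted_folding p s (\<lambda>_. -1) F j i))"
    if j: "j \<in> {1..N}" for j
    using FP[OF j] unfolding LF proj_eq_def by (intro exI[of _ "?P j"]) auto
  show ?thesis unfolding circ_net_def using c1 c2 c3 c4 by blast
qed

lemma mfold_eq: "j \<noteq> 0 \<Longrightarrow> mfold_map p m1 m2 lt (Suc j) = inv_in (mfold_vec p m1 m2 lt j) \<circ> mfold_map p m1 m2 lt j"
  by (simp add: mfold_vec_def)

lemma mfold_mob:
  assumes "\<forall>j\<in>{1..<N}. m_inv_vec p (mfold_vec p m1 m2 lt j)"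
  shows "j \<le> N \<Longrightarrow> mobius p (mfold_map p m1 m2 lt j)"
proof (induction j)
  case 0 thus ?case using mobius_id[of p] by (simp add: id_def)
next
  case (Suc j)
  show ?case
  proof (cases "j = 0")
    case True thus ?thesis using mobius_id[of p] by (simp add: id_def)
  next
    case False
    then have "j \<in> {1..<N}" using Suc.prems by auto
    then have "m_inv_vec p (mfold_vec p m1 m2 lt j)" using assms by blast
    moreover have "mobius p (mfold_map p m1 m2 lt j)" using Suc False by auto
    ultimately show ?thesis unfolding mfold_eq[OF False] by (rule mobius_step[rotated])
  qed
qed

lemma partB:
  assumes pp: "lf p p = -1" and sp: "is_sphere p s"
    and cv: "\<forall>j\<in>{1..N}. is_curve p V (G j) \<and> (\<forall>i\<in>V. lf (G j i) s = 0)"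
    and rt: "\<forall>j\<in>{1..<N}. rib_type p V (G j) (G (Suc j)) s (m j)"
    and nz: "\<forall>j\<in>{1..<N}. lf (mfold_vec p (\<lambda>_. s) m lt j) (mfold_vec p (\<lambda>_. s) m lt j) \<noteq> 0"
  shows "circ_net_sph p V N (mfolding p (\<lambda>_. s) m lt G)"
proof -
  let ?P = "mfold_map p (\<lambda>_. s) m lt"
  let ?n = "mfold_vec p (\<lambda>_. s) m lt"
  have np: "lf (nvec p y) p = 0" for y using pp unfolding nvec_def by (simp add: lf_simps)
  have mi: "\<forall>j\<in>{1..<N}. m_inv_vec p (?n j)" using nz np unfolding m_inv_vec_def mfold_vec_def by simp
  have G: "good p (?P j)" if "j \<le> N" for j using mfold_mob[OF mi that] mobius_good by blast
  have LF: "mfolding p (\<lambda>_. s) m lt G j i = ?P j (G j i)" for j i by (simp add: mfolding_def)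
  have c1: "is_curve p V (mfolding p (\<lambda>_. s) m lt G j)" if j: "j \<in> {1..N}" for j
    using cv j good_point[OF G] unfolding is_curve_def LF by auto
  have c2: "rib_pair V (mfolding p (\<lambda>_. s) m lt G j) (mfolding p (\<lambda>_. s) m lt G (Suc j))"
    if j: "j \<in> {1..<N}" for j
    unfolding rib_pair_def
  proof (intro allI impI)
    fix i assume i: "i \<in> V \<and> i + 1 \<in> V"
    have jj: "j \<le> N" "j \<noteq> 0" using j by auto
    define T where "T = ?P j"
    have GT: "good p T" using G[OF jj(1)] T_def by simp
    have lT: "lf (T x) (T y) = lf x y" for x y using GT unfolding good_def by blast
    have Tp: "T p = p" using GT unfolding good_def by blast
    have sT: "T (c *\<^sub>R x) = c *\<^sub>R T x" for c x using GT unfolding good_def by blast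
    obtain a where a: "m_inv_vec p a" "proj_eq (inv_in a (G j i)) (G j (i + 1))"
      "proj_eq (inv_in a (G (Suc j) i)) (G (Suc j) (i + 1))"
      "\<forall>x\<in>span {s, m j, p}. inv_in a x = x"
      using rt j i unfolding rib_type_def by blast
    obtain \<alpha> where al: "\<alpha> \<noteq> 0" "G j (i + 1) = \<alpha> *\<^sub>R inv_in a (G j i)" using a(2) unfolding proj_eq_def by blast
    obtain \<beta> where be: "\<beta> \<noteq> 0" "G (Suc j) (i + 1) = \<beta> *\<^sub>R inv_in a (G (Suc j) i)" using a(3) unfolding proj_eq_def by blast
    have La: "lf a a \<noteq> 0" "lf a p = 0" using a(1) unfolding m_inv_vec_def by auto
    have pT: "lf p (T a) = 0" using lT[of p a] Tp La(2) lf_sym[of p a] by simp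
    have "s + lt j *\<^sub>R m j \<in> span {s, m j, p}"
      by (intro span_add span_scale span_base) auto
    hence ya: "lf (s + lt j *\<^sub>R m j) a = 0" using a(4) inv_in_fixD[OF La(1)] by blast
    have nb: "lf (?n j) (T a) = 0"
      unfolding mfold_vec_def nvec_def T_def[symmetric]
      using ya La(2) pT by (simp add: lf_simps lT lf_sym[of p a])
    have X2: "T (G j (i + 1)) = \<alpha> *\<^sub>R inv_in (T a) (T (G j i))"
      unfolding al(2) sT good_inv[OF GT] ..
    have X3: "inv_in (?n j) (T (G (Suc j) (i + 1))) = \<beta> *\<^sub>R inv_in (T a) (inv_in (?n j) (T (G (Suc j) i)))"
      unfolding be(2) sT good_inv[OF GT] inv_in_scale inv_in_comm[OF nb] ..
    show "concircular (mfolding p (\<lambda>_. s) m lt G j i) (mfolding p (\<lambda>_. s) m lt G j (i + 1))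
       (mfolding p (\<lambda>_. s) m lt G (Suc j) (i + 1)) (mfolding p (\<lambda>_. s) m lt G (Suc j) i)"
      unfolding LF mfold_eq[OF jj(2)] o_apply T_def[symmetric]
      by (rule concirc_B[OF X2 X3 al(1) be(1)])
  qed
  have c3: "\<exists>t. is_sphere p t \<and> (\<forall>i\<in>V. lf (mfolding p (\<lambda>_. s) m lt G j i) t = 0)"
    if j: "j \<in> {1..N}" for j
  proof (intro exI conjI)
    have GT: "good p (?P j)" using G j by auto
    show "is_sphere p (?P j s)" using good_sphere[OF GT sp] .
    show "\<forall>i\<in>V. lf (mfolding p (\<lambda>_. s) m lt G j i) (?P j s) = 0"
      using GT cv j unfolding LF good_def by auto
  qed
  show ?thesis unfolding circ_net_sph_def circ_net_def using c1 c2 c3 by blast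
qed


theorem corollary2p9:
  shows
  "(\<forall>p V N F s.
      lf p p = -1 \<and>
      circ_net p V N F \<and>
      (\<forall>j\<in>{1..N}. is_sphere p (s j) \<and> lf (s j) p = -1 \<and> (\<forall>i\<in>V. lf (F j i) (s j) = 0)) \<and>
      (\<forall>j\<in>{1..<N}. \<not> proj_eq (s j) (s (Suc j))) \<and>
      (\<forall>j\<in>{1..<N}. lf (s j) (s (Suc j)) \<noteq> 0)
    \<longrightarrow>
      circ_net p V N (lifted_folding p s (\<lambda>_. -1) F) \<and>
      (\<forall>j\<in>{1..N}. \<forall>i\<in>V. lf (lifted_folding p s (\<lambda>_. -1) F j i) (s 1) = 0) \<and>
      (\<forall>j\<in>{1..N}. \<exists>T. mobius p T \<and>
          (\<forall>i\<in>V. proj_eq (T (F j i)) (lifted_folding p s (\<lambda>_. -1) F j i))))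
   \<and>
   (\<forall>p V N s G m.
      lf p p = -1 \<and> is_sphere p s \<and>
      (\<forall>j\<in>{1..N}. is_curve p V (G j) \<and> (\<forall>i\<in>V. lf (G j i) s = 0)) \<and>
      (\<forall>j\<in>{1..<N}. rib_type p V (G j) (G (Suc j)) s (m j))
    \<longrightarrow>
      (\<forall>lt. (\<forall>j\<in>{1..<N}. lf (mfold_vec p (\<lambda>_. s) m lt j) (mfold_vec p (\<lambda>_. s) m lt j) \<noteq> 0)
         \<longrightarrow> circ_net_sph p V N (mfolding p (\<lambda>_. s) m lt G)))"
  proof (intro conjI allI impI)
  fix p V N F s
  assume h: "lf p p = -1 \<and>
      circ_net p V N F \<and>
      (\<forall>j\<in>{1..N}. is_sphere p (s j) \<and> lf (s j) p = -1 \<and> (\<forall>i\<in>V. lf (F j i) (s j) = 0)) \<and>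
      (\<forall>j\<in>{1..<N}. \<not> proj_eq (s j) (s (Suc j))) \<and>
      (\<forall>j\<in>{1..<N}. lf (s j) (s (Suc j)) \<noteq> 0)"
  note r = partA[of p V N F s]
  show "circ_net p V N (lifted_folding p s (\<lambda>_. -1) F)" using h r by blast
  show "\<forall>j\<in>{1..N}. \<forall>i\<in>V. lf (lifted_folding p s (\<lambda>_. -1) F j i) (s 1) = 0" using h r by blast
  show "\<forall>j\<in>{1..N}. \<exists>T. mobius p T \<and>
          (\<forall>i\<in>V. proj_eq (T (F j i)) (lifted_folding p s (\<lambda>_. -1) F j i))" using h r by blast
next
  fix p V N s G m lt
  assume "lf p p = -1 \<and> is_sphere p s \<and>
      (\<forall>j\<in>{1..N}. is_curve p V (G j) \<and> (\<forall>i\<in>V. lf (G j i) s = 0)) \<and>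
      (\<forall>j\<in>{1..<N}. rib_type p V (G j) (G (Suc j)) s (m j))"
    and "\<forall>j\<in>{1..<N}. lf (mfold_vec p (\<lambda>_. s) m lt j) (mfold_vec p (\<lambda>_. s) m lt j) \<noteq> 0"
  then show "circ_net_sph p V N (mfolding p (\<lambda>_. s) m lt G)" using partB by blast
qed

end
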